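(* In the max-plus semiring $\mathbb{Q}_{\max}$, the set $$\mathscr{S}=\big\{(u_1,v_1,u_2,v_2)\in\mathbb{Q}_{\max}^4:\ \forall k\in\mathbb{N},\ \max(u_1+kv_1,\ u_2+kv_2)\ge0\big\}$$ (i.e. the set of evaluations $(u_1,v_1,u_2,v_2)$ for which $u_1(v_1X)^*\oplus u_2(v_2X)^*\ge(0X)^*$ coefficientwise) is not semi-polyhedral.
   Context: $\mathbb{Q}_{\max}$ is $\mathbb{Q}\cup\{-\infty\}$ with $a\oplus b=\max(a,b)$ and $a\otimes b=a+b$; the term $u+kv$ denotes the max-plus product $u\otimes v^{\otimes k}$ (with $v^{\otimes 0}=0$, the unit), and the order is the usual order with $-\infty$ smallest. A monomial on $\mathbb{Q}_{\max}^4$ is $m(x)=a\otimes x_1^{\otimes\alpha_1}\otimes\cdots\otimes x_4^{\otimes\alpha_4}$ with $a\in\mathbb{Q}_{\max}$, $\alpha_i\in\mathbb{N}$ (in usual notation $a+\sum_i\alpha_ix_i$); a half-space is $\{x:m(x)\ge m'(x)\}$ for monomials $m,m'$; a polyhedron is a finite intersection of half-spaces; a semi-polyhedral set is a finite union of polyhedra. *)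

theory Defs
  imports Main "HOL.Rat"
begin

datatype qmax = NegInf | Fin rat

fun qle :: "qmax \<Rightarrow> qmax \<Rightarrow> bool" where
  "qle NegInf _ = True"
| "qle (Fin a) NegInf = False"
| "qle (Fin a) (Fin b) = (a \<le> b)"

fun qplus :: "qmax \<Rightarrow> qmax \<Rightarrow> qmax" where
  "qplus NegInf y = y"
| "qplus x NegInf = x"
| "qplus (Fin a) (Fin b) = Fin (max a b)"

fun qtimes :: "qmax \<Rightarrow> qmax \<Rightarrow> qmax" where
  "qtimes NegInf _ = NegInf"
| "qtimes _ NegInf = NegInf"
| "qtimes (Fin a) (Fin b) = Fin (a + b)"

text \<open>Max-plus power; v^0 = 0 (the unit Fin 0), also for v = -\<infinity>.\<close>
fun qpow :: "qmax \<Rightarrow> nat \<Rightarrow> qmax" where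
  "qpow v 0 = Fin 0"
| "qpow v (Suc k) = qtimes v (qpow v k)"

type_synonym point4 = "qmax \<times> qmax \<times> qmax \<times> qmax"

text \<open>A monomial a \<otimes> x1^a1 \<otimes> x2^a2 \<otimes> x3^a3 \<otimes> x4^a4 is given by (a, a1, a2, a3, a4).\<close>
type_synonym monomial4 = "qmax \<times> nat \<times> nat \<times> nat \<times> nat"

fun mono_eval :: "monomial4 \<Rightarrow> point4 \<Rightarrow> qmax" where
  "mono_eval (a, a1, a2, a3, a4) (x1, x2, x3, x4) =
     qtimes a (qtimes (qpow x1 a1) (qtimes (qpow x2 a2) (qtimes (qpow x3 a3) (qpow x4 a4))))"

definition half_space :: "monomial4 \<Rightarrow> monomial4 \<Rightarrow> point4 set" where
  "half_space m m' = {x. qle (mono_eval m' x) (mono_eval m x)}"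

definition polyhedron :: "point4 set \<Rightarrow> bool" where
  "polyhedron P \<longleftrightarrow> (\<exists>H :: (monomial4 \<times> monomial4) set. finite H \<and>
       P = (\<Inter>(m, m') \<in> H. half_space m m'))"

definition semi_polyhedral :: "point4 set \<Rightarrow> bool" where
  "semi_polyhedral S \<longleftrightarrow> (\<exists>F :: point4 set set. finite F \<and> (\<forall>P \<in> F. polyhedron P) \<and> S = \<Union>F)"

definition Sset :: "point4 set" where
  "Sset = {(u1, v1, u2, v2). \<forall>k::nat.
      qle (Fin 0) (qplus (qtimes u1 (qpow v1 k)) (qtimes u2 (qpow v2 k)))}"

end

theory Submission
  imports Defs
begin

lemma qpow_Fin: "qpow (Fin x) k = Fin (of_nat k * x)"
  by (induction k) (auto simp: algebra_simps)

definition pt :: "rat \<Rightarrow> point4" where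
  "pt a = (Fin (-(a+1)), Fin 1, Fin a, Fin (-1))"

lemma mono_pt:
  "mono_eval (c, a1, a2, a3, a4) (pt a) = (case c of NegInf \<Rightarrow> NegInf
     | Fin c' \<Rightarrow> Fin (c' + of_nat a1 * (-(a+1)) + of_nat a2 + of_nat a3 * a - of_nat a4))"
  by (cases c) (simp_all add: pt_def qpow_Fin algebra_simps)

lemma affine_between:
  fixes A B x y z :: rat
  assumes "0 \<le> A + B * x" "0 \<le> A + B * y" "x \<le> z" "z \<le> y"
  shows "0 \<le> A + B * z"
proof (cases "B \<ge> 0")
  case True
  then have "B * x \<le> B * z" using assms by (simp add: mult_left_mono)
  then show ?thesis using assms by linarith
next
  case False
  then have "B * y \<le> B * z" using assms by (simp add: mult_left_mono_neg)
  then show ?thesis using assms by linarith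
qed

lemma half_between:
  assumes "pt x \<in> half_space mm mm'" "pt y \<in> half_space mm mm'" "x \<le> z" "z \<le> y"
  shows "pt z \<in> half_space mm mm'"
proof -
  obtain c a1 a2 a3 a4 where m: "mm = (c, a1, a2, a3, a4)" by (cases mm) auto
  obtain c' b1 b2 b3 b4 where m': "mm' = (c', b1, b2, b3, b4)" by (cases mm') auto
  show ?thesis
  proof (cases c')
    case NegInf
    then show ?thesis by (simp add: half_space_def m m' mono_pt)
  next
    case (Fin d')
    show ?thesis
    proof (cases c)
      case NegInf
      then show ?thesis using assms(1) Fin by (simp add: half_space_def m m' mono_pt)
    next
      case (Fin d)
      let ?A = "(d - of_nat a1 + of_nat a2 - of_nat a4) - (d' - of_nat b1 + of_nat b2 - of_nat b4)"
      let ?B = "(of_nat a3 - of_nat a1) - (of_nat b3 - of_nat b1) :: rat"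
      have key: "pt w \<in> half_space mm mm' \<longleftrightarrow> 0 \<le> ?A + ?B * w" for w
        using Fin \<open>c' = Fin d'\<close> unfolding half_space_def m m'
        apply (simp add: mono_pt)
        apply (simp only: ring_distribs)
        by linarith
      from assms(1,2) have "0 \<le> ?A + ?B * x" "0 \<le> ?A + ?B * y" by (simp_all only: key)
      then have "0 \<le> ?A + ?B * z" by (rule affine_between[OF _ _ assms(3,4)])
      then show ?thesis by (simp only: key)
    qed
  qed
qed

lemma poly_between:
  assumes "polyhedron P" "pt x \<in> P" "pt y \<in> P" "x \<le> z" "z \<le> y"
  shows "pt z \<in> P"
proof -
  obtain H where H: "finite H" "P = (\<Inter>(m, m') \<in> H. half_space m m')"
    using assms(1) unfolding polyhedron_def by blast
  have "pt z \<in> half_space m m'" if p: "(m, m') \<in> H" for m m'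
  proof -
    have "pt x \<in> half_space m m'" using assms(2) p unfolding H(2) by blast
    moreover have "pt y \<in> half_space m m'" using assms(3) p unfolding H(2) by blast
    ultimately show ?thesis using half_between assms(4,5) by blast
  qed
  then show ?thesis unfolding H(2) by blast
qed

lemma pt_in: "pt (of_nat n) \<in> Sset"
proof -
  have "qle (Fin 0) (qplus (qtimes (Fin (-(of_nat n + 1))) (qpow (Fin 1) k))
           (qtimes (Fin (of_nat n)) (qpow (Fin (-1)) k)))" for k
  proof -
    have "(of_nat k::rat) \<le> of_nat n \<or> of_nat n + 1 \<le> (of_nat k::rat)"
    proof (cases "k \<le> n")
      case True then show ?thesis by simp
    next
      case False then have "n + 1 \<le> k" by simp
      then have "(of_nat (n+1)::rat) \<le> of_nat k" by (simp only: of_nat_le_iff)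
      then show ?thesis by simp
    qed
    then show ?thesis
      apply (simp add: qpow_Fin le_max_iff_disj)
      apply (erule disjE)
       apply (rule disjI2, linarith)
      apply (rule disjI1, linarith)
      done
  qed
  then show ?thesis by (simp add: Sset_def pt_def)
qed

lemma pt_out: "pt (of_nat n + 1/2) \<notin> Sset"
proof -
  have "\<not> qle (Fin 0) (qplus (qtimes (Fin (-(of_nat n + 1/2 + 1))) (qpow (Fin 1) (Suc n)))
           (qtimes (Fin (of_nat n + 1/2)) (qpow (Fin (-1)) (Suc n))))"
    by (simp add: qpow_Fin algebra_simps)
  then show ?thesis unfolding Sset_def pt_def by blast
qed

theorem mainTheorem14:
  shows "\<not> semi_polyhedral Sset"
proof
  assume "semi_polyhedral Sset"
  then obtain F where F: "finite F" "\<forall>P\<in>F. polyhedron P" "Sset = \<Union>F"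
    unfolding semi_polyhedral_def by blast
  have "\<forall>n. \<exists>P\<in>F. pt (of_nat n) \<in> P" using pt_in F(3) by blast
  then obtain f where f: "\<And>n. f n \<in> F \<and> pt (of_nat n) \<in> f n" by metis
  have "range f \<subseteq> F" using f by blast
  then have "finite (range f)" using F(1) finite_subset by blast
  then have "\<not> inj f" using finite_imageD by blast
  then obtain n m where nm: "f n = f m" "n \<noteq> m" unfolding inj_def by blast
  have "\<exists>i j. i < j \<and> f i = f j" using nm by (metis linorder_neqE_nat)
  then obtain i j where ij: "i < j" "f i = f j" by blast
  have "pt (of_nat i + 1/2) \<in> f i"
    apply (rule poly_between[of "f i" "of_nat i" "of_nat j"])
    using f F(2) ij by auto
  then have "pt (of_nat i + 1/2) \<in> Sset" using f F(3) by blast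
  then show False using pt_out by blast
qed

end
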